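(* The sequence $\nu=(\nu_k)_{k\in\mathbb N}$ is bounded from above if and only if there exists a $\mathcal{KL}_{\rm gen}$-$\operatorname{Fin}(X^{\rm in})$ upper bound $(\gamma,\theta)$ for $(X^{\rm in},T,\varphi)$. If moreover $G^{>}_\nu\neq\emptyset$, then $(\gamma,\theta)$ can be chosen useful for $\nu$.
   Context: Standing data: a nonempty set $X^{\rm in}\subseteq\mathbb R^d$, a map $T:\mathbb R^d\to\mathbb R^d$ ($T^k$ its $k$-fold composition, $T^0=\mathrm{Id}$), $\varphi:\mathbb R^d\to\mathbb R$ with $\varphi(0)=0$; $\nu_k=\sup_{x\in X^{\rm in}}\varphi(T^k(x))$, assumed finite for every $k$. $G^{>}_\nu=\{k:\nu_k>\limsup_n\nu_n\}$. For $f:\mathbb R^d\to\mathbb R\cup\{+\infty\}$, $\overline f:=\sup_{x\in X^{\rm in}}f(x)$; $\operatorname{Fin}(X^{\rm in})=\{f:\mathbb R^d\to\mathbb R\cup\{+\infty\}:\overline f<+\infty\}$. $\mathcal{KL}_{\rm gen}$ is the set of functions $\gamma:\mathbb R\times\mathbb R_+\to\mathbb R$ such that $s\mapsto\gamma(s,t)$ is (not necessarily strictly) increasing for every $t\ge0$ and $t\mapsto\gamma(s,t)$ is (not necessarily strictly) decreasing for every $s\in\mathbb R$. A pair $(\gamma,\theta)\in\mathcal{KL}_{\rm gen}\times\operatorname{Fin}(X^{\rm in})$ is a $\mathcal{KL}_{\rm gen}$-$\operatorname{Fin}(X^{\rm in})$ upper bound for $(X^{\rm in},T,\varphi)$ if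 $\varphi(T^k(x))\le\gamma(\theta(x),k)$ for all $k\in\mathbb N$, $x\in X^{\rm in}$; it is useful for $\nu$ (when $G^{>}_\nu\ne\emptyset$) if $\{k\in G^{>}_\nu:\inf_{t\ge0}\gamma(\overline\theta,t)<\nu_k\}\neq\emptyset$. *)

theory Defs
  imports "HOL-Analysis.Analysis"
begin

definition nu :: "('a set) \<Rightarrow> ('a \<Rightarrow> 'a) \<Rightarrow> ('a \<Rightarrow> real) \<Rightarrow> nat \<Rightarrow> real" where
  "nu X T \<phi> k = (SUP x\<in>X. \<phi> ((T ^^ k) x))"

definition Ggt :: "(nat \<Rightarrow> real) \<Rightarrow> nat set" where
  "Ggt \<nu> = {k. ereal (\<nu> k) > limsup (\<lambda>n. ereal (\<nu> n))}"

text \<open>Functions into R union {+infinity} are modelled as ereal-valued functions never equal to -infinity.\<close>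
definition sup_on :: "'a set \<Rightarrow> ('a \<Rightarrow> ereal) \<Rightarrow> ereal" where
  "sup_on X f = (SUP x\<in>X. f x)"

definition Fin :: "'a set \<Rightarrow> ('a \<Rightarrow> ereal) set" where
  "Fin X = {f. (\<forall>x. f x \<noteq> -\<infinity>) \<and> sup_on X f < \<infinity>}"

text \<open>KL_gen: gamma : R x R_+ -> R, increasing in s for each t >= 0, decreasing in t on [0,inf) for each s.
  Values at t < 0 are irrelevant.\<close>
definition KL_gen :: "(real \<Rightarrow> real \<Rightarrow> real) set" where
  "KL_gen = {\<gamma>. (\<forall>t\<ge>0. mono (\<lambda>s. \<gamma> s t)) \<and> (\<forall>s. antimono_on {0..} (\<lambda>t. \<gamma> s t))}"

definition is_upper_bound ::
  "'a set \<Rightarrow> ('a \<Rightarrow> 'a) \<Rightarrow> ('a \<Rightarrow> real) \<Rightarrow> (real \<Rightarrow> real \<Rightarrow> real) \<Rightarrow> ('a \<Rightarrow> ereal) \<Rightarrow> bool" where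
  "is_upper_bound X T \<phi> \<gamma> \<theta> \<longleftrightarrow> \<gamma> \<in> KL_gen \<and> \<theta> \<in> Fin X \<and>
     (\<forall>k::nat. \<forall>x\<in>X. \<phi> ((T ^^ k) x) \<le> \<gamma> (real_of_ereal (\<theta> x)) (real k))"

definition useful :: "(nat \<Rightarrow> real) \<Rightarrow> 'a set \<Rightarrow> (real \<Rightarrow> real \<Rightarrow> real) \<Rightarrow> ('a \<Rightarrow> ereal) \<Rightarrow> bool" where
  "useful \<nu> X \<gamma> \<theta> \<longleftrightarrow>
     {k \<in> Ggt \<nu>. (INF t\<in>{0::real..}. ereal (\<gamma> (real_of_ereal (sup_on X \<theta>)) t)) < ereal (\<nu> k)} \<noteq> {}"

end

theory Submission
  imports Defs
begin

lemma construct: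
  fixes X :: "'a set" and \<nu> :: "nat \<Rightarrow> real"
  assumes ne: "X \<noteq> {}" and bd: "bdd_above (range \<nu>)"
    and le: "\<And>k x. x \<in> X \<Longrightarrow> \<phi> ((T ^^ k) x) \<le> \<nu> k"
    and nu_def: "\<nu> = nu X T \<phi>"
  defines "\<gamma> \<equiv> (\<lambda>(s::real) (t::real). (SUP j\<in>{j::nat. t \<le> real j}. \<nu> j))"
  shows "is_upper_bound X T \<phi> \<gamma> (\<lambda>x. 0)
     \<and> (Ggt \<nu> \<noteq> {} \<longrightarrow> useful \<nu> X \<gamma> (\<lambda>x. 0))"
proof -
  have nonempty: "{j::nat. t \<le> real j} \<noteq> {}" for t
    using real_arch_simple[of t] by auto
  have bdA: "bdd_above (\<nu> ` A)" for A
    using bd by (meson bdd_above_mono image_mono subset_UNIV)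
  have KL: "\<gamma> \<in> KL_gen"
    unfolding KL_gen_def
  proof safe
    fix t :: real show "mono (\<lambda>s. \<gamma> s t)" by (simp add: \<gamma>_def mono_def)
  next
    fix s :: real
    show "antimono_on {0..} (\<lambda>t. \<gamma> s t)"
    proof (rule monotone_onI)
      fix t t' :: real assume "t \<le> t'"
      then have sub: "{j::nat. t' \<le> real j} \<subseteq> {j. t \<le> real j}" by auto
      show "\<gamma> s t' \<le> \<gamma> s t" unfolding \<gamma>_def
        by (simp, rule cSUP_subset_mono[OF nonempty bdA sub], simp)
    qed
  qed
  have sup0: "sup_on X (\<lambda>x. 0 :: ereal) = 0"
    unfolding sup_on_def using ne by simp
  have Fin: "(\<lambda>x. 0 :: ereal) \<in> Fin X"
    unfolding Fin_def using sup0 by simp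
  have gk: "\<nu> k \<le> \<gamma> s (real k)" for s k
    unfolding \<gamma>_def by (simp, rule cSUP_upper[OF _ bdA], simp)
  have ub: "is_upper_bound X T \<phi> \<gamma> (\<lambda>x. 0)"
    unfolding is_upper_bound_def using KL Fin le gk by (meson order_trans)
  moreover have "useful \<nu> X \<gamma> (\<lambda>x. 0)" if G: "Ggt \<nu> \<noteq> {}"
  proof -
    obtain k where k: "k \<in> Ggt \<nu>" using G by auto
    then have "(INF n. SUP m\<in>{n..}. ereal (\<nu> m)) < ereal (\<nu> k)"
      unfolding Ggt_def by (simp add: limsup_INF_SUP)
    then obtain N where N: "(SUP m\<in>{N..}. ereal (\<nu> m)) < ereal (\<nu> k)"
      by (auto simp: INF_less_iff)
    define L where "L = (SUP m\<in>{N..}. ereal (\<nu> m))"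
    have "ereal (\<nu> N) \<le> L" unfolding L_def by (rule SUP_upper) simp
    moreover have "L < ereal (\<nu> k)" using N L_def by simp
    ultimately obtain c where c: "L = ereal c" by (cases L) auto
    have "c < \<nu> k" using N c L_def by simp
    have each: "\<nu> m \<le> c" if "m \<ge> N" for m
    proof -
      have "ereal (\<nu> m) \<le> L" unfolding L_def by (rule SUP_upper) (simp add: that)
      then show ?thesis using c by simp
    qed
    have "\<gamma> 0 (real N) \<le> c"
      unfolding \<gamma>_def by (simp, rule cSUP_least, use nonempty in blast, simp add: each)
    have "(INF t\<in>{0::real..}. ereal (\<gamma> 0 t)) \<le> ereal (\<gamma> 0 (real N))"
      by (rule INF_lower) simp
    also have "\<dots> \<le> ereal c" using \<open>\<gamma> 0 (real N) \<le> c\<close> by simp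
    also have "\<dots> < ereal (\<nu> k)" using \<open>c < \<nu> k\<close> by simp
    finally have "(INF t\<in>{0::real..}. ereal (\<gamma> 0 t)) < ereal (\<nu> k)" .
    then show ?thesis unfolding useful_def sup0 using k by auto
  qed
  ultimately show ?thesis by blast
qed

theorem mainTheorem10:
  fixes X :: "(real ^ 'd) set" and T :: "real ^ 'd \<Rightarrow> real ^ 'd" and \<phi> :: "real ^ 'd \<Rightarrow> real"
  assumes "X \<noteq> {}"
    and "\<phi> 0 = 0"
    and "\<forall>k. bdd_above ((\<lambda>x. \<phi> ((T ^^ k) x)) ` X)"
  shows "(bdd_above (range (nu X T \<phi>)) \<longleftrightarrow> (\<exists>\<gamma> \<theta>. is_upper_bound X T \<phi> \<gamma> \<theta>))
    \<and> (bdd_above (range (nu X T \<phi>)) \<and> Ggt (nu X T \<phi>) \<noteq> {} \<longrightarrow>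
         (\<exists>\<gamma> \<theta>. is_upper_bound X T \<phi> \<gamma> \<theta> \<and> useful (nu X T \<phi>) X \<gamma> \<theta>))"
proof -
  have le: "\<phi> ((T ^^ k) x) \<le> nu X T \<phi> k" if "x \<in> X" for k x
    unfolding nu_def using assms(3) that by (auto intro: cSUP_upper)
  have bkw: "bdd_above (range (nu X T \<phi>))" if UB: "is_upper_bound X T \<phi> \<gamma> \<theta>" for \<gamma> \<theta>
  proof -
    from UB have KL: "\<gamma> \<in> KL_gen" and F: "\<theta> \<in> Fin X"
      and b: "\<forall>k. \<forall>x\<in>X. \<phi> ((T ^^ k) x) \<le> \<gamma> (real_of_ereal (\<theta> x)) (real k)"
      unfolding is_upper_bound_def by auto
    obtain x0 where x0: "x0 \<in> X" using assms(1) by auto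
    have ninf: "\<theta> x \<noteq> -\<infinity>" for x using F unfolding Fin_def by auto
    have S: "sup_on X \<theta> < \<infinity>" using F unfolding Fin_def by auto
    have xle: "\<theta> x \<le> sup_on X \<theta>" if "x \<in> X" for x
      unfolding sup_on_def using that by (rule SUP_upper)
    have "sup_on X \<theta> \<ge> \<theta> x0" using xle x0 by simp
    then have Sfin: "sup_on X \<theta> \<noteq> -\<infinity>" using ninf[of x0] by auto
    define r where "r = real_of_ereal (sup_on X \<theta>)"
    have mono_s: "mono (\<lambda>s. \<gamma> s t)" if "t \<ge> 0" for t
      using KL that unfolding KL_gen_def by auto
    have anti: "antimono_on {0..} (\<lambda>t. \<gamma> s t)" for s
      using KL unfolding KL_gen_def by auto
    have "nu X T \<phi> k \<le> \<gamma> r 0" for k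
      unfolding nu_def
    proof (rule cSUP_least[OF assms(1)])
      fix x assume x: "x \<in> X"
      have fin: "\<bar>\<theta> x\<bar> \<noteq> \<infinity>" using xle[OF x] S ninf[of x] by auto
      obtain a where a: "\<theta> x = ereal a" using fin by (cases "\<theta> x") auto
      obtain b where bb: "sup_on X \<theta> = ereal b" using S Sfin by (cases "sup_on X \<theta>") auto
      have "real_of_ereal (\<theta> x) \<le> r"
        unfolding r_def using xle[OF x] a bb by simp
      then have "\<gamma> (real_of_ereal (\<theta> x)) (real k) \<le> \<gamma> r (real k)"
        using mono_s[of "real k"] by (auto dest: monoD)
      also have "\<dots> \<le> \<gamma> r 0" using monotone_onD[OF anti[of r], of 0 "real k"] by simp
      finally show "\<phi> ((T ^^ k) x) \<le> \<gamma> r 0" using b x by (meson order_trans)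
    qed
    then show ?thesis by (intro bdd_aboveI[of _ "\<gamma> r 0"]) auto
  qed
  have fwd: "\<exists>\<gamma> \<theta>. is_upper_bound X T \<phi> \<gamma> \<theta> \<and> (Ggt (nu X T \<phi>) \<noteq> {} \<longrightarrow> useful (nu X T \<phi>) X \<gamma> \<theta>)"
    if B: "bdd_above (range (nu X T \<phi>))"
  proof -
    have "\<And>k x. x \<in> X \<Longrightarrow> \<phi> ((T ^^ k) x) \<le> nu X T \<phi> k" by (rule le)
    from construct[of X "nu X T \<phi>" \<phi> T, OF assms(1) B this refl] show ?thesis by blast
  qed
  show ?thesis
  proof (intro conjI impI iffI)
    assume "bdd_above (range (nu X T \<phi>))"
    then show "\<exists>\<gamma> \<theta>. is_upper_bound X T \<phi> \<gamma> \<theta>" using fwd by blast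
  next
    assume "\<exists>\<gamma> \<theta>. is_upper_bound X T \<phi> \<gamma> \<theta>"
    then obtain g th where "is_upper_bound X T \<phi> g th" by blast
    then show "bdd_above (range (nu X T \<phi>))" by (rule bkw)
  next
    assume "bdd_above (range (nu X T \<phi>)) \<and> Ggt (nu X T \<phi>) \<noteq> {}"
    then show "\<exists>\<gamma> \<theta>. is_upper_bound X T \<phi> \<gamma> \<theta> \<and> useful (nu X T \<phi>) X \<gamma> \<theta>"
      using fwd by blast
  qed
qed

end
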